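(* For all $r,s\ge1$, as an identity of polynomials in $q$, $$\sum_{C\ \text{maximal}}(q-1)^{r+s-l(C)-1}=\sum_{m=0}^{\min(r-1,s-1)}\binom{r-1}{m}\binom{s-1}{m}q^{m},$$ where the sum runs over all maximal cells $C$ for $(r,s)$.
   Context: A cell (for given $r,s$) is a finite (possibly empty) sequence of distinct pairs $(i_1,j_1),\dots,(i_l,j_l)$ with $1\le i_k\le r$, $1\le j_k\le s$, $i_1\le\cdots\le i_l$ and $j_1\le\cdots\le j_l$; $l(C)=l$ is its length. The cell is maximal if $\{i_1,\dots,i_l\}=\{1,\dots,r\}$ and $\{j_1,\dots,j_l\}=\{1,\dots,s\}$. *)

theory Defs
  imports "HOL-Computational_Algebra.Polynomial"
begin

definition is_cell :: "nat \<Rightarrow> nat \<Rightarrow> (nat \<times> nat) list \<Rightarrow> bool" where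
  "is_cell r s C \<longleftrightarrow> distinct C
     \<and> (\<forall>(i, j) \<in> set C. 1 \<le> i \<and> i \<le> r \<and> 1 \<le> j \<and> j \<le> s)
     \<and> sorted (map fst C) \<and> sorted (map snd C)"

definition is_maximal_cell :: "nat \<Rightarrow> nat \<Rightarrow> (nat \<times> nat) list \<Rightarrow> bool" where
  "is_maximal_cell r s C \<longleftrightarrow> is_cell r s C
     \<and> fst ` set C = {1..r} \<and> snd ` set C = {1..s}"

end

theory Submission
  imports Defs
begin

fun paths :: "nat \<Rightarrow> nat \<Rightarrow> (nat \<times> nat) list set" where
  "paths 0 0 = {[(1,1)]}"
| "paths (Suc R) 0 = (\<lambda>C. C @ [(R+2,1)]) ` paths R 0"
| "paths 0 (Suc S) = (\<lambda>C. C @ [(1,S+2)]) ` paths 0 S"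
| "paths (Suc R) (Suc S) = (\<lambda>C. C @ [(R+2,S+2)]) ` (paths R (Suc S) \<union> paths (Suc R) S \<union> paths R S)"

lemma paths_finite: "finite (paths R S)"
  by (induction R S rule: paths.induct) auto

lemma paths_len: "C \<in> paths R S \<Longrightarrow> length C \<le> R + S + 1"
  by (induction R S arbitrary: C rule: paths.induct) fastforce+

lemma paths_last: "C \<in> paths R S \<Longrightarrow> C \<noteq> [] \<and> last C = (R+1, S+1)"
  by (induction R S arbitrary: C rule: paths.induct) auto

definition X :: "int poly" where "X = [:-1, 1:]"

definition W :: "nat \<Rightarrow> nat \<Rightarrow> int poly" where
  "W R S = (\<Sum>C\<in>paths R S. X ^ (R + S + 1 - length C))"

lemma W00: "W 0 0 = 1" by (simp add: W_def)

lemma inj_app: "inj (\<lambda>C. C @ [x])" by (rule injI) simp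

lemma WR0: "W (Suc R) 0 = W R 0"
  unfolding W_def by (simp add: sum.reindex inj_app[THEN inj_on_subset] inj_on_def)

lemma W0S: "W 0 (Suc S) = W 0 S"
  unfolding W_def by (simp add: sum.reindex inj_on_def)

lemma WSS: "W (Suc R) (Suc S) = W R (Suc S) + W (Suc R) S + X * W R S"
proof -
  let ?f = "\<lambda>C. X ^ (Suc R + Suc S + 1 - length C)"
  let ?A = "paths R (Suc S)" and ?B = "paths (Suc R) S" and ?C = "paths R S"
  have d1: "?A \<inter> ?B = {}"
  proof (rule ccontr)
    assume "?A \<inter> ?B \<noteq> {}"
    then obtain C where "C \<in> ?A" "C \<in> ?B" by blast
    then show False using paths_last[of C R "Suc S"] paths_last[of C "Suc R" S] by auto
  qed
  have d2: "(?A \<union> ?B) \<inter> ?C = {}"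
  proof (rule ccontr)
    assume "(?A \<union> ?B) \<inter> ?C \<noteq> {}"
    then obtain C where "C \<in> ?A \<or> C \<in> ?B" "C \<in> ?C" by blast
    then show False using paths_last[of C R "Suc S"] paths_last[of C "Suc R" S] paths_last[of C R S] by auto
  qed
  have "W (Suc R) (Suc S) = (\<Sum>C\<in>?A \<union> ?B \<union> ?C. X ^ (R + S + 2 - length C))"
    unfolding W_def by (simp add: sum.reindex inj_on_def)
  also have "\<dots> = (\<Sum>C\<in>?A. X ^ (R + S + 2 - length C)) + (\<Sum>C\<in>?B. X ^ (R + S + 2 - length C))
      + (\<Sum>C\<in>?C. X ^ (R + S + 2 - length C))"
    by (simp add: sum.union_disjoint paths_finite d1 d2)
  also have "(\<Sum>C\<in>?C. X ^ (R + S + 2 - length C)) = (\<Sum>C\<in>?C. X * X ^ (R + S + 1 - length C))"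
  proof (rule sum.cong)
    fix C assume "C \<in> ?C"
    then have "length C \<le> R + S + 1" by (rule paths_len)
    then have "R + S + 2 - length C = Suc (R + S + 1 - length C)" by simp
    then show "X ^ (R + S + 2 - length C) = X * X ^ (R + S + 1 - length C)" by simp
  qed simp
  finally show ?thesis unfolding W_def by (simp add: sum_distrib_left)
qed

lemma coeff_X_mult: "coeff (X * p) m = (case m of 0 \<Rightarrow> 0 | Suc k \<Rightarrow> coeff p k) - coeff p m"
  by (simp add: X_def split: nat.split)

lemma coeff_W: "coeff (W R S) m = int (R choose m) * int (S choose m)"
proof (induction R S arbitrary: m rule: paths.induct)
  case 1 then show ?case by (simp add: W00)
next
  case (2 R) then show ?case by (cases m) (simp_all add: WR0)
next
  case (3 S) then show ?case by (cases m) (simp_all add: W0S)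
next
  case (4 R S)
  show ?case
  proof (cases m)
    case 0 then show ?thesis by (simp add: WSS coeff_X_mult 4)
  next
    case (Suc k)
    then show ?thesis by (simp add: WSS coeff_X_mult 4 algebra_simps)
  qed
qed

lemma paths_sub: "C \<in> paths R S \<Longrightarrow> is_maximal_cell (R+1) (S+1) C"
proof (induction R S arbitrary: C rule: paths.induct)
  case 1 then show ?case by (auto simp: is_maximal_cell_def is_cell_def)
next
  case (2 R)
  then obtain C' where C: "C = C' @ [(R+2,1)]" and M: "is_maximal_cell (R+1) 1 C'" by auto
  show ?case using M unfolding C is_maximal_cell_def is_cell_def
    by (auto simp: sorted_append atLeastAtMostSuc_conv image_iff)
next
  case (3 S)
  then obtain C' where C: "C = C' @ [(1,S+2)]" and M: "is_maximal_cell 1 (S+1) C'" by auto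
  show ?case using M unfolding C is_maximal_cell_def is_cell_def
    by (auto simp: sorted_append atLeastAtMostSuc_conv image_iff)
next
  case (4 R S)
  then obtain C' where C: "C = C' @ [(R+2,S+2)]" and M: "is_maximal_cell (R+1) (S+2) C' \<or>
     is_maximal_cell (R+2) (S+1) C' \<or> is_maximal_cell (R+1) (S+1) C'" by auto
  show ?case using M unfolding C is_maximal_cell_def is_cell_def
    by (auto simp: sorted_append atLeastAtMostSuc_conv image_iff)
qed

lemma max_paths:
  "is_maximal_cell (R+1) (S+1) C \<Longrightarrow> C \<in> paths R S"
proof (induction C arbitrary: R S rule: rev_induct)
  case Nil then show ?case by (auto simp: is_maximal_cell_def)
next
  case (snoc x C')
  obtain xa xb where x: "x = (xa, xb)" by force
  have cell: "is_cell (R+1) (S+1) (C' @ [x])"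
    and F: "fst ` set (C' @ [x]) = {1..R+1}" and G: "snd ` set (C' @ [x]) = {1..S+1}"
    using snoc.prems by (auto simp: is_maximal_cell_def)
  have dist: "distinct C'" "x \<notin> set C'" using cell by (auto simp: is_cell_def)
  have bnd: "\<And>i j. (i,j) \<in> set C' \<Longrightarrow> 1 \<le> i \<and> i \<le> R+1 \<and> 1 \<le> j \<and> j \<le> S+1"
    using cell by (auto simp: is_cell_def)
  have srt: "sorted (map fst C')" "sorted (map snd C')"
    using cell by (auto simp: is_cell_def sorted_append)
  have le: "\<And>y. y \<in> set C' \<Longrightarrow> fst y \<le> xa \<and> snd y \<le> xb"
    using cell by (auto simp: is_cell_def sorted_append x)
  have "R+1 \<in> fst ` set (C' @ [x])" unfolding F by simp
  then have "R+1 \<le> xa" using le x by force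
  moreover have "xa \<le> R+1" using cell by (auto simp: is_cell_def x)
  ultimately have xa: "xa = R+1" by simp
  have "S+1 \<in> snd ` set (C' @ [x])" unfolding G by simp
  then have "S+1 \<le> xb" using le x by force
  moreover have "xb \<le> S+1" using cell by (auto simp: is_cell_def x)
  ultimately have xb: "xb = S+1" by simp
  show ?case
  proof (cases "C' = []")
    case True
    have e1: "fst ` set (C' @ [x]) = {R+1}" "snd ` set (C' @ [x]) = {S+1}"
      using True x xa xb by simp_all
    have "(1::nat) \<in> {1..R+1}" "(1::nat) \<in> {1..S+1}" by simp_all
    then have "(1::nat) \<in> {R+1}" "(1::nat) \<in> {S+1}" using F G e1 by (simp only:)+
    then have "R = 0" "S = 0" by simp_all
    then show ?thesis using True x xa xb by simp
  next
    case False
    then obtain C'' y where C': "C' = C'' @ [y]" by (metis rev_exhaust)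
    obtain a b where y: "y = (a, b)" by force
    have yin: "y \<in> set C'" using C' by simp
    have le2: "\<And>z. z \<in> set C' \<Longrightarrow> fst z \<le> a \<and> snd z \<le> b"
      using srt unfolding C' y by (auto simp: sorted_append)
    have ab: "1 \<le> a" "a \<le> R+1" "1 \<le> b" "b \<le> S+1" using bnd[of a b] yin y by auto
    have Fs: "{1..R} \<subseteq> fst ` set C'"
    proof
      fix i assume i: "i \<in> {1..R}"
      then have "i \<in> fst ` set (C' @ [x])" unfolding F by simp
      then show "i \<in> fst ` set C'" using i x xa by auto
    qed
    have Gs: "{1..S} \<subseteq> snd ` set C'"
    proof
      fix i assume i: "i \<in> {1..S}"
      then have "i \<in> snd ` set (C' @ [x])" unfolding G by simp
      then show "i \<in> snd ` set C'" using i x xb by auto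
    qed
    have aR: "R \<le> a"
    proof (cases R)
      case (Suc R') then have "R \<in> fst ` set C'" using Fs by auto
      then show ?thesis using le2 by force
    qed simp
    have bS: "S \<le> b"
    proof (cases S)
      case (Suc S') then have "S \<in> snd ` set C'" using Gs by auto
      then show ?thesis using le2 by force
    qed simp
    have ne: "(a, b) \<noteq> (R+1, S+1)" using dist yin y x xa xb by auto
    have M: "is_maximal_cell a b C'"
    proof -
      have c: "is_cell a b C'" using dist srt bnd le2 unfolding is_cell_def by fastforce
      have "fst ` set C' \<subseteq> {1..a}" using bnd le2 by force
      moreover have "{1..a} \<subseteq> fst ` set C'"
      proof
        fix i assume "i \<in> {1..a}"
        then have "i \<in> {1..R} \<or> i = a" using ab aR by auto
        then show "i \<in> fst ` set C'" using Fs yin y by force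
      qed
      moreover have "snd ` set C' \<subseteq> {1..b}" using bnd le2 by force
      moreover have "{1..b} \<subseteq> snd ` set C'"
      proof
        fix i assume "i \<in> {1..b}"
        then have "i \<in> {1..S} \<or> i = b" using ab bS by auto
        then show "i \<in> snd ` set C'" using Gs yin y by force
      qed
      ultimately show ?thesis using c unfolding is_maximal_cell_def by blast
    qed
    have IH: "C' \<in> paths (a - 1) (b - 1)"
      using snoc.IH[of "a - 1" "b - 1"] M ab by simp
    have C: "C' @ [x] = C' @ [(R+1, S+1)]" using x xa xb by simp
    show ?thesis
    proof (cases R)
      case 0
      then have a1: "a = 1" using ab by simp
      show ?thesis
      proof (cases S)
        case 0 then show ?thesis using ne a1 ab \<open>R = 0\<close> by simp
      next
        case (Suc S')
        then have "b = S' + 1" using ne a1 ab bS \<open>R = 0\<close> by auto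
        then show ?thesis using IH a1 Suc \<open>R = 0\<close> C by simp
      qed
    next
      case (Suc R')
      show ?thesis
      proof (cases S)
        case 0
        then have "b = 1" "a = R' + 1" using ne ab aR Suc by auto
        then show ?thesis using IH 0 Suc C by simp
      next
        case (Suc S')
        have "(a = R' + 1 \<and> b = S' + 2) \<or> (a = R' + 2 \<and> b = S' + 1) \<or> (a = R' + 1 \<and> b = S' + 1)"
          using ne ab aR bS Suc \<open>R = Suc R'\<close> by auto
        then show ?thesis using IH Suc \<open>R = Suc R'\<close> C by auto
      qed
    qed
  qed
qed

lemma max_eq: "{C. is_maximal_cell (R+1) (S+1) C} = paths R S"
  using max_paths paths_sub by blast

theorem mainTheorem16:
  fixes r s :: nat
  assumes "1 \<le> r" and "1 \<le> s"
  shows "(\<Sum>C\<in>{C. is_maximal_cell r s C}. ([:-1, 1:] :: int poly) ^ (r + s - length C - 1))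
       = (\<Sum>m = 0..min (r - 1) (s - 1).
            of_nat ((r - 1) choose m) * of_nat ((s - 1) choose m) * ([:0, 1:] :: int poly) ^ m)"
proof -
  obtain R S where r: "r = R + 1" and s: "s = S + 1" using assms
    by (metis add.commute le_add_diff_inverse)
  have L: "(\<Sum>C\<in>{C. is_maximal_cell r s C}. ([:-1, 1:] :: int poly) ^ (r + s - length C - 1)) = W R S"
    unfolding r s max_eq W_def X_def by (intro sum.cong) auto
  show ?thesis unfolding L
  proof (rule poly_eqI)
    fix n
    have "coeff (\<Sum>m = 0..min (r - 1) (s - 1).
            of_nat ((r - 1) choose m) * of_nat ((s - 1) choose m) * ([:0, 1:] :: int poly) ^ m) n
        = (\<Sum>m = 0..min R S. if m = n then int (R choose m) * int (S choose m) else 0)"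
      unfolding coeff_sum r s by (intro sum.cong) (auto simp: monom_altdef[of 1, simplified, symmetric] of_nat_poly)
    also have "\<dots> = int (R choose n) * int (S choose n)"
      by (auto simp: min_def not_le)
    finally show "coeff (W R S) n = coeff (\<Sum>m = 0..min (r - 1) (s - 1).
            of_nat ((r - 1) choose m) * of_nat ((s - 1) choose m) * ([:0, 1:] :: int poly) ^ m) n"
      by (simp add: coeff_W)
  qed
qed

end
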